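(* Assume the setting described in the context (quadratic nonlinearity with exponentially decaying semigroup estimators). Let $f_0\in F$ and $\varphi_{ap}\in C([0,+\infty),F)$, and suppose there are constants $E,D\in[0,+\infty)$ such that for all $t\ge0$: $\|E(\varphi_{ap})(t)\|\le Ee^{-Bt}$, where $E(\varphi_{ap})(t):=\varphi_{ap}(t)-e^{t\mathcal A}f_0-\int_0^te^{(t-s)\mathcal A}\mathcal P(\varphi_{ap}(s),s)\,ds$, and $\|\varphi_{ap}(t)\|\le De^{-Bt}$. Assume $2\sqrt{KNE}+2KND\le1$. Then VP$(f_0)$ has a global solution $\varphi:[0,+\infty)\to F$ and, for all $t\ge0$, $\|\varphi(t)-\varphi_{ap}(t)\|\le Re^{-Bt}$, where $$R:=\frac{1-2KND-\sqrt{(1-2KND)^2-4KNE}}{2KN}.$$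
   Context: Banach spaces over a common field. $X\hookrightarrow Y$ means $X$ is a dense subspace of $Y$ with continuous inclusion. Setting: $F_+,F,F_-$ Banach spaces with norms $\|\cdot\|_+,\|\cdot\|,\|\cdot\|_-$, $F_+\hookrightarrow F\hookrightarrow F_-$; $\mathcal A:F_+\to F_-$ linear with $\|\cdot\|_+$ equivalent on $F_+$ to $\|f\|_-+\|\mathcal Af\|_-$; $\mathcal A$ generates a strongly continuous semigroup $(e^{t\mathcal A})_{t\ge0}$ on $F_-$ (domain $F_+$); $e^{t\mathcal A}(F)\subset F$ ($t\ge0$) with $(f,t)\mapsto e^{t\mathcal A}f$ continuous $F\times[0,\infty)\to F$; $e^{t\mathcal A}(F_-)\subset F$ ($t>0$) with $(f,t)\mapsto e^{t\mathcal A}f$ continuous $F_-\times(0,\infty)\to F$. There are constants $B\ge0$, $N>0$ such that $\|e^{t\mathcal A}f\|\le e^{-Bt}\|f\|$ for $t\ge0$, $f\in F$, and $\|e^{t\mathcal A}f\|\le\mu_-(t)e^{-Bt}\|f\|_-$ for $t>0$, $f\in F_-$, where $\mu_-\in C((0,\infty),(0,\infty))$, $\mu_-(t)=O(t^{-(1-\sigma)})$ as $t\to0^+$ for some $\sigma\in(0,1]$, and $\int_0^t\mu_-(t-s)e^{-Bs}ds\le N$ for all $t\ge0$. $\mathscr P:F\times F\to F_-$ bilinear with $\|\mathscr P(f,g)\|_-\le K\|f\|\|g\|$, $K\in(0,\infty)$; $\xi:[0,+\infty)\to F_-$ locally Lipschitz; $\mathcal P(f,t):=\mathscr P(f,f)+\xi(t)$.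 VP$(f_0)$ asks for $\varphi\in C([0,T),F)$ with $\varphi(t)=e^{t\mathcal A}f_0+\int_0^te^{(t-s)\mathcal A}\mathcal P(\varphi(s),s)\,ds$ for $t\in[0,T)$. *)

theory Defs
  imports "HOL-Analysis.Analysis" "HOL-Library.Landau_Symbols"
begin

definition strongly_continuous_semigroup :: "(real \<Rightarrow> 'm::banach \<Rightarrow> 'm) \<Rightarrow> bool" where
  "strongly_continuous_semigroup T \<longleftrightarrow>
     (\<forall>t\<ge>0. bounded_linear (T t)) \<and>
     T 0 = id \<and>
     (\<forall>s\<ge>0. \<forall>t\<ge>0. T (s + t) = T s \<circ> T t) \<and>
     (\<forall>x. continuous_on {0..} (\<lambda>t. T t x))"

text \<open>A (with domain the range of the embedding j) is the infinitesimal generator of T: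
  the domain is exactly the set of x for which the right difference quotient converges,
  and on it the limit is A.\<close>
definition is_generator ::
  "(real \<Rightarrow> 'm::banach \<Rightarrow> 'm) \<Rightarrow> ('p \<Rightarrow> 'm) \<Rightarrow> ('p \<Rightarrow> 'm) \<Rightarrow> bool" where
  "is_generator T j A \<longleftrightarrow>
     (\<forall>p. ((\<lambda>h. (1 / h) *\<^sub>R (T h (j p) - j p)) \<longlongrightarrow> A p) (at_right 0)) \<and>
     (\<forall>x. (\<exists>y. ((\<lambda>h. (1 / h) *\<^sub>R (T h x - x)) \<longlongrightarrow> y) (at_right 0)) \<longrightarrow> x \<in> range j)"

definition dense_embedding :: "('a::real_normed_vector \<Rightarrow> 'b::real_normed_vector) \<Rightarrow> bool" where
  "dense_embedding i \<longleftrightarrow> bounded_linear i \<and> inj i \<and> closure (range i) = UNIV"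

end

theory Submission
  imports Defs
begin


lemma mu_local:
  fixes \<mu> :: "real \<Rightarrow> real"
  assumes "\<mu> \<in> O[at_right 0](\<lambda>t. t powr (- (1 - \<sigma>)))"
  shows "\<exists>c r1. c > 0 \<and> r1 > 0 \<and> (\<forall>r. 0 < r \<and> r < r1 \<longrightarrow> \<bar>\<mu> r\<bar> \<le> c * r powr (\<sigma> - 1))"
proof -
  obtain c where c: "c > 0" "eventually (\<lambda>x. norm (\<mu> x) \<le> c * norm (x powr (- (1 - \<sigma>)))) (at_right 0)"
    using landau_o.bigE[OF assms] by blast
  then obtain b where b: "b > 0" "\<forall>y>0. y < b \<longrightarrow> norm (\<mu> y) \<le> c * norm (y powr (- (1 - \<sigma>)))"
    by (auto simp: eventually_at_right_field)
  show ?thesis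
    using c(1) b by (intro exI[of _ c] exI[of _ b]) auto
qed

lemma sets_lebesgue_Ioc: "{a<..(b::real)} \<in> sets lebesgue" by simp
lemma sets_lebesgue_Ico: "{a..<(b::real)} \<in> sets lebesgue" by simp

lemma mu_integrable:
  fixes \<mu> :: "real \<Rightarrow> real"
  assumes big: "\<mu> \<in> O[at_right 0](\<lambda>t. t powr (- (1 - \<sigma>)))"
    and cont: "continuous_on {0<..} \<mu>" and sig: "\<sigma> > 0" and a: "a \<ge> 0"
  shows "\<mu> integrable_on {0..a}"
proof -
  obtain c r1 where cr: "c > 0" "r1 > 0" "\<And>r. 0 < r \<Longrightarrow> r < r1 \<Longrightarrow> \<bar>\<mu> r\<bar> \<le> c * r powr (\<sigma> - 1)"
    using mu_local[OF big] by blast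
  have "compact (\<mu> ` {r1/2..max a (r1/2)})"
    by (rule compact_continuous_image, rule continuous_on_subset[OF cont]) (use \<open>r1>0\<close> in auto)
  then obtain M where M: "M > 0" "\<And>r. r \<in> {r1/2..max a (r1/2)} \<Longrightarrow> \<bar>\<mu> r\<bar> \<le> M"
    by (metis compact_imp_bounded bounded_pos imageI real_norm_def)
  define g where "g r = c * r powr (\<sigma> - 1) + M" for r
  have gi: "g integrable_on {0..a}"
    unfolding g_def using sig a
    by (intro integrable_add integrable_on_mult_right integrable_on_powr_from_0) auto
  have gi': "g integrable_on {0<..a}"
    by (rule integrable_spike_set[OF gi]) (auto intro: negligible_subset[of "{0}"])
  have meas: "\<mu> \<in> borel_measurable (lebesgue_on {0<..a})"
    by (rule continuous_imp_measurable_on_sets_lebesgue) (auto intro: continuous_on_subset[OF cont])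
  have "\<mu> integrable_on {0<..a}"
  proof (rule measurable_bounded_by_integrable_imp_integrable[OF meas gi'])
    fix x assume x: "x \<in> {0<..a}"
    show "norm (\<mu> x) \<le> g x"
    proof (cases "x < r1")
      case True
      then show ?thesis using cr(3)[of x] x M(1) by (simp add: g_def)
    next
      case False
      then have "\<bar>\<mu> x\<bar> \<le> M" using M(2)[of x] x \<open>r1>0\<close> by auto
      moreover have "c * x powr (\<sigma> - 1) \<ge> 0" using cr(1) by simp
      ultimately show ?thesis by (simp add: g_def)
    qed
  qed auto
  then show ?thesis
    by (rule integrable_spike_set) (auto intro: negligible_subset[of "{0}"])
qed

lemma improper_int:
  fixes f :: "real \<Rightarrow> 'a::banach" and g :: "real \<Rightarrow> real"
  assumes ab: "a \<le> b" and fc: "continuous_on {a..<b} f" and gi: "g integrable_on {a..b}"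
    and le: "\<And>x. x \<in> {a..<b} \<Longrightarrow> norm (f x) \<le> g x"
  shows "f integrable_on {a..b}" "norm (integral {a..b} f) \<le> integral {a..b} g"
proof -
  have main: "f integrable_on {a..b}"
  proof (cases "a = b")
    case True then show ?thesis using integrable_on_refl[of f b] by simp
  next
    case False
    then have ab': "a < b" using ab by simp
    define G where "G x = integral {a..x} f" for x
    define Gg where "Gg x = integral {a..x} g" for x
    have fi: "f integrable_on {x..y}" if "a \<le> x" "y < b" for x y
      by (rule integrable_continuous_interval, rule continuous_on_subset[OF fc]) (use that in auto)
    have diff: "norm (G y - G x) \<le> Gg y - Gg x" if "a \<le> x" "x \<le> y" "y < b" for x y
    proof -
      have fiy: "f integrable_on {a..y}" using fi[of a y] that by simp
      have "G y - G x = integral {x..y} f"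
        using Henstock_Kurzweil_Integration.integral_combine[OF that(1,2) fiy] that by (simp add: G_def algebra_simps)
      also have "norm \<dots> \<le> integral {x..y} g"
        by (rule integral_norm_bound_integral[OF fi])
           (use that in \<open>auto intro: integrable_on_subinterval[OF gi] le\<close>)
      also have "\<dots> = Gg y - Gg x"
        using Henstock_Kurzweil_Integration.integral_combine[OF that(1,2) integrable_on_subinterval[OF gi, of a y]] that
        by (simp add: Gg_def algebra_simps)
      finally show ?thesis .
    qed
    have ucg: "uniformly_continuous_on {a..b} Gg"
      unfolding Gg_def by (rule compact_uniformly_continuous[OF indefinite_integral_continuous_1[OF gi]]) simp
    have "uniformly_continuous_on {a..<b} G"
      unfolding uniformly_continuous_on_def
    proof (intro allI impI)
      fix e :: real assume "e > 0"
      then obtain d where d: "d > 0" "\<And>x x'. x \<in> {a..b} \<Longrightarrow> x' \<in> {a..b} \<Longrightarrow> dist x' x < d \<Longrightarrow> dist (Gg x') (Gg x) < e"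
        using ucg unfolding uniformly_continuous_on_def by metis
      show "\<exists>d>0. \<forall>x\<in>{a..<b}. \<forall>x'\<in>{a..<b}. dist x' x < d \<longrightarrow> dist (G x') (G x) < e"
      proof (intro exI[of _ d] conjI ballI impI)
        fix x x' assume xx: "x \<in> {a..<b}" "x' \<in> {a..<b}" "dist x' x < d"
        show "dist (G x') (G x) < e"
        proof (cases "x \<le> x'")
          case True
          have "dist (G x') (G x) \<le> Gg x' - Gg x"
            using diff[of x x'] xx True by (simp add: dist_norm)
          also have "\<dots> \<le> dist (Gg x') (Gg x)" by (simp add: dist_real_def)
          also have "\<dots> < e" using d(2)[of x x'] xx by auto
          finally show ?thesis .
        next
          case False
          have "dist (G x') (G x) \<le> Gg x - Gg x'"
            using diff[of x' x] xx False by (simp add: dist_norm norm_minus_commute)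
          also have "\<dots> \<le> dist (Gg x') (Gg x)" by (simp add: dist_real_def)
          also have "\<dots> < e" using d(2)[of x x'] xx by auto
          finally show ?thesis .
        qed
      qed (rule d(1))
    qed
    then obtain l where l: "(G \<longlongrightarrow> l) (at b within {a..<b})"
      using uniformly_continuous_on_extension_at_closure[of "{a..<b}" G b] ab' by auto
    define H where "H x = (if x = b then l else G x)" for x
    have Hc: "continuous_on {a..b} H"
      unfolding continuous_on_eq_continuous_within
    proof
      fix x assume x: "x \<in> {a..b}"
      show "continuous (at x within {a..b}) H"
      proof (cases "x = b")
        case True
        have e1: "at b within {a..b} = at b within {a..<b}"
          by (rule at_within_nhd[of _ UNIV]) auto
        have "eventually (\<lambda>y. G y = H y) (at b within {a..<b})"
          unfolding eventually_at_filter
          by (intro always_eventually) (auto simp: H_def)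
        with l have "(H \<longlongrightarrow> l) (at b within {a..<b})"
          by (rule Lim_transform_eventually)
        then show ?thesis using True e1 by (simp add: continuous_within H_def)
      next
        case False
        then have xb: "x < b" using x by auto
        define c where "c = (x+b)/2"
        have "continuous_on {a..c} G" unfolding G_def
          by (rule indefinite_integral_continuous_1[OF fi]) (use x xb in \<open>simp_all add: c_def\<close>)
        then have "continuous (at x within {a..c}) G"
          using x xb by (simp add: continuous_on_eq_continuous_within c_def)
        moreover have e1: "at x within {a..b} = at x within {a..c}"
          by (rule at_within_nhd[of _ "{..<c}"]) (use x xb in \<open>auto simp: c_def\<close>)
        ultimately have "(G \<longlongrightarrow> G x) (at x within {a..b})"
          by (simp add: continuous_within)
        moreover have "eventually (\<lambda>y. G y = H y) (at x within {a..c})"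
          unfolding eventually_at_filter using xb
          by (intro always_eventually) (auto simp: H_def c_def)
        ultimately have "(H \<longlongrightarrow> G x) (at x within {a..b})"
          unfolding e1 by (rule Lim_transform_eventually)
        then have "(H \<longlongrightarrow> H x) (at x within {a..b})"
          using xb by (simp add: H_def)
        then show ?thesis by (simp add: continuous_within)
      qed
    qed
    have "(f has_integral (H b - H a)) {a..b}"
    proof (rule fundamental_theorem_of_calculus_interior[OF ab Hc])
      fix x assume x: "x \<in> {a<..<b}"
      define c where "c = (x+b)/2"
      have "(G has_vector_derivative f x) (at x within {a..c})"
        unfolding G_def
        by (rule integral_has_vector_derivative, rule continuous_on_subset[OF fc])
           (use x in \<open>auto simp: c_def\<close>)
      moreover have "at x within {a..c} = at x"
        by (rule at_within_open_subset[of _ "{a<..<c}"]) (use x in \<open>auto simp: c_def\<close>)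
      ultimately have "(G has_vector_derivative f x) (at x)" by simp
      then show "(H has_vector_derivative f x) (at x)"
        by (rule has_vector_derivative_transform_within_open[of _ _ _ "{a<..<b}"])
           (use x in \<open>auto simp: H_def\<close>)
    qed
    then show ?thesis by blast
  qed
  show "f integrable_on {a..b}" by (rule main)
  define f' where "f' x = (if x = b then 0 else f x)" for x
  have eq: "integral {a..b} f = integral {a..b} f'"
    by (rule integral_spike[of "{b}"]) (auto simp: f'_def)
  have fi': "f' integrable_on {a..b}"
    by (rule integrable_spike[OF main, of "{b}"]) (auto simp: f'_def)
  define g' where "g' x = (if x = b then 0 else g x)" for x
  have eqg: "integral {a..b} g = integral {a..b} g'"
    by (rule integral_spike[of "{b}"]) (auto simp: g'_def)
  have gi': "g' integrable_on {a..b}"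
    by (rule integrable_spike[OF gi, of "{b}"]) (auto simp: g'_def)
  have "norm (integral {a..b} f') \<le> integral {a..b} g'"
    by (rule integral_norm_bound_integral[OF fi' gi']) (auto simp: f'_def g'_def intro: le)
  then show "norm (integral {a..b} f) \<le> integral {a..b} g" by (simp add: eq eqg)
qed




lemma has_integral_refl_shift:
  fixes f :: "real \<Rightarrow> 'a::banach"
  assumes "(f has_integral I) {0..t-b}"
  shows "((\<lambda>s. f (t - s)) has_integral I) {b..t}"
proof -
  have "((f \<circ> (+) t) has_integral I) {-t..-b}"
    using assms by (subst has_integral_shift_Icc_real) simp
  then have "((\<lambda>x. (f \<circ> (+) t) (-x)) has_integral I) {- (-b)..- (-t)}"
    by (subst has_integral_reflect_real) simp
  then show ?thesis by (simp add: o_def)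
qed

lemma integrable_refl_shift:
  fixes f :: "real \<Rightarrow> 'a::banach"
  assumes "f integrable_on {0..t-b}"
  shows "(\<lambda>s. f (t - s)) integrable_on {b..t}"
    "integral {b..t} (\<lambda>s. f (t - s)) = integral {0..t-b} f"
  using has_integral_refl_shift[OF integrable_integral[OF assms]]
  by (auto simp: integrable_on_def integral_unique)

lemma cont_glue:
  fixes f :: "real \<Rightarrow> 'a::topological_space"
  assumes "\<And>T. T \<ge> 0 \<Longrightarrow> continuous_on {0..T} f"
  shows "continuous_on {0..} f"
  unfolding continuous_on_eq_continuous_within
proof
  fix x :: real assume x: "x \<in> {0..}"
  have "continuous (at x within {0..x+1}) f"
    using assms[of "x+1"] x by (auto simp: continuous_on_eq_continuous_within)
  moreover have "at x within {0..} = at x within {0..x+1}"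
    by (rule at_within_nhd[of _ "{..<x+1}"]) auto
  ultimately show "continuous (at x within {0..}) f" by (simp add: continuous_within)
qed

locale setting =
  fixes iF :: "'f::banach \<Rightarrow> 'm::banach" and T :: "real \<Rightarrow> 'm \<Rightarrow> 'm"
    and SF :: "real \<Rightarrow> 'f \<Rightarrow> 'f" and Sm :: "real \<Rightarrow> 'm \<Rightarrow> 'f"
    and B N K \<sigma> :: real and \<mu> :: "real \<Rightarrow> real" and Pb :: "'f \<Rightarrow> 'f \<Rightarrow> 'm" and \<xi> :: "real \<Rightarrow> 'm"
  assumes iF_lin: "linear iF" and iF_inj: "inj iF"
    and T_lin: "\<And>t. t \<ge> 0 \<Longrightarrow> linear (T t)"
    and SF_def: "\<And>t f. t \<ge> 0 \<Longrightarrow> iF (SF t f) = T t (iF f)"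
    and SF_cont: "continuous_on (UNIV \<times> {0..}) (\<lambda>(f, t). SF t f)"
    and Sm_def: "\<And>t g. t > 0 \<Longrightarrow> iF (Sm t g) = T t g"
    and Sm_cont: "continuous_on (UNIV \<times> {0<..}) (\<lambda>(g, t). Sm t g)"
    and B_nonneg: "B \<ge> 0" and N_pos: "N > 0"
    and Sm_est: "\<And>t g. t > 0 \<Longrightarrow> norm (Sm t g) \<le> \<mu> t * exp (- B * t) * norm g"
    and \<mu>_cont: "continuous_on {0<..} \<mu>" and \<mu>_nonneg: "\<And>t. \<mu> t \<ge> 0"
    and \<sigma>_pos: "\<sigma> > 0"
    and \<mu>_bigO: "\<mu> \<in> O[at_right 0](\<lambda>t. t powr (- (1 - \<sigma>)))"
    and \<mu>_int: "\<And>t. t \<ge> 0 \<Longrightarrow> integral {0..t} (\<lambda>s. \<mu> (t - s) * exp (- B * s)) \<le> N"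
    and Pb_bil: "bilinear Pb" and K_pos: "K > 0"
    and Pb_bound: "\<And>f g. norm (Pb f g) \<le> K * norm f * norm g"
    and \<xi>_cont: "continuous_on {0..} \<xi>"
begin

lemma Sm_diff: "t > 0 \<Longrightarrow> Sm t (x - y) = Sm t x - Sm t y"
proof -
  assume t: "t > 0"
  have "iF (Sm t (x - y)) = iF (Sm t x - Sm t y)"
    using t by (simp add: Sm_def linear_diff[OF T_lin] linear_diff[OF iF_lin])
  then show ?thesis using iF_inj by (simp add: inj_eq)
qed

lemma mu_int: "a \<ge> 0 \<Longrightarrow> \<mu> integrable_on {0..a}"
  by (rule mu_integrable[OF \<mu>_bigO \<mu>_cont \<sigma>_pos])

lemma mu_refl_int: "a \<le> t \<Longrightarrow> (\<lambda>s. \<mu> (t - s)) integrable_on {a..t}"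
    "a \<le> t \<Longrightarrow> integral {a..t} (\<lambda>s. \<mu> (t - s)) = integral {0..t-a} \<mu>"
  using integrable_refl_shift[OF mu_int[of "t-a"]] by auto

lemma Mu_small:
  assumes e: "e > 0"
  shows "\<exists>\<eta>>0. \<eta> \<le> 1 \<and> (\<forall>x. 0 \<le> x \<longrightarrow> x \<le> \<eta> \<longrightarrow> integral {0..x} \<mu> < e)"
proof -
  have "continuous_on {0..1} (\<lambda>x. integral {0..x} \<mu>)"
    by (rule indefinite_integral_continuous_1[OF mu_int]) simp
  then obtain d where d: "d > 0" "\<And>x. x \<in> {0..1} \<Longrightarrow> dist x 0 < d \<Longrightarrow>
      dist (integral {0..x} \<mu>) (integral {0..0} \<mu>) < e"
    unfolding continuous_on_iff using e by (metis atLeastAtMost_iff order_refl zero_le_one)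
  show ?thesis
  proof (intro exI[of _ "min 1 (d/2)"] conjI allI impI)
    fix x :: real assume "0 \<le> x" "x \<le> min 1 (d/2)"
    then show "integral {0..x} \<mu> < e"
      using d(2)[of x] d(1) by (auto simp: dist_real_def)
  qed (use d in auto)
qed

lemma conv_real_int:
  assumes a: "0 \<le> a" "a \<le> t" and hc: "continuous_on {a..t} h"
  shows "(\<lambda>s. \<mu> (t - s) * h s) integrable_on {a..t}"
proof -
  have "compact (h ` {a..t})" by (rule compact_continuous_image[OF hc]) simp
  then obtain H where H: "H > 0" "\<And>s. s \<in> {a..t} \<Longrightarrow> norm (h s) \<le> H"
    by (metis compact_imp_bounded bounded_pos imageI)
  have mi: "(\<lambda>s. H * \<mu> (t - s)) integrable_on {a..t}"
    by (intro integrable_on_mult_right mu_refl_int(1)[OF a(2)])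
  have mi': "(\<lambda>s. H * \<mu> (t - s)) integrable_on {a..<t}"
    by (rule integrable_spike_set[OF mi]) (auto intro: negligible_subset[of "{t}"])
  have mc: "continuous_on {a..<t} (\<lambda>s. \<mu> (t - s) * h s)"
  proof (intro continuous_on_mult)
    show "continuous_on {a..<t} (\<lambda>s. \<mu> (t - s))"
      by (rule continuous_on_compose2[OF \<mu>_cont]) (auto intro!: continuous_intros)
    show "continuous_on {a..<t} h" by (rule continuous_on_subset[OF hc]) auto
  qed
  have meas: "(\<lambda>s. \<mu> (t - s) * h s) \<in> borel_measurable (lebesgue_on {a..<t})"
    by (rule continuous_imp_measurable_on_sets_lebesgue[OF mc]) simp
  have "(\<lambda>s. \<mu> (t - s) * h s) integrable_on {a..<t}"
  proof (rule measurable_bounded_by_integrable_imp_integrable[OF meas mi'])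
    fix x assume x: "x \<in> {a..<t}"
    have "norm (\<mu> (t - x) * h x) = \<mu> (t - x) * norm (h x)"
      using \<mu>_nonneg[of "t-x"] by (simp add: abs_mult)
    also have "\<dots> \<le> \<mu> (t - x) * H"
      using H(2)[of x] x \<mu>_nonneg[of "t-x"] by (intro mult_left_mono) auto
    finally show "norm (\<mu> (t - x) * h x) \<le> H * \<mu> (t - x)" by (simp add: mult.commute)
  qed simp
  then show ?thesis
    by (rule integrable_spike_set) (auto intro: negligible_subset[of "{t}"])
qed

lemma conv_int:
  fixes y :: "real \<Rightarrow> 'm"
  assumes a: "0 \<le> a" "a \<le> t" and yc: "continuous_on {a..t} y"
  shows "(\<lambda>s. Sm (t - s) (y s)) integrable_on {a..t}"
    "norm (integral {a..t} (\<lambda>s. Sm (t - s) (y s)))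
       \<le> integral {a..t} (\<lambda>s. \<mu> (t - s) * (exp (- B * (t - s)) * norm (y s)))"
proof -
  have gi: "(\<lambda>s. \<mu> (t - s) * (exp (- B * (t - s)) * norm (y s))) integrable_on {a..t}"
    by (rule conv_real_int[OF a]) (auto intro!: continuous_intros yc)
  have fc: "continuous_on {a..<t} (\<lambda>s. Sm (t - s) (y s))"
  proof -
    have "continuous_on {a..<t} (\<lambda>s. (\<lambda>(g, t). Sm t g) (y s, t - s))"
      by (rule continuous_on_compose2[OF Sm_cont])
         (auto intro!: continuous_intros intro: continuous_on_subset[OF yc])
    then show ?thesis by simp
  qed
  have le: "norm (Sm (t - s) (y s)) \<le> \<mu> (t - s) * (exp (- B * (t - s)) * norm (y s))"
    if "s \<in> {a..<t}" for s
    using Sm_est[of "t - s" "y s"] that by (simp add: mult.assoc)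
  show "(\<lambda>s. Sm (t - s) (y s)) integrable_on {a..t}"
    "norm (integral {a..t} (\<lambda>s. Sm (t - s) (y s)))
       \<le> integral {a..t} (\<lambda>s. \<mu> (t - s) * (exp (- B * (t - s)) * norm (y s)))"
    using improper_int[OF a(2) fc gi le] by auto
qed

end



context setting begin

lemma conv_tail:
  fixes y :: "real \<Rightarrow> 'm"
  assumes a: "0 \<le> a" "a \<le> t" and yc: "continuous_on {a..t} y"
    and Y: "\<And>s. s \<in> {a..t} \<Longrightarrow> norm (y s) \<le> Y"
  shows "norm (integral {a..t} (\<lambda>s. Sm (t - s) (y s))) \<le> Y * integral {0..t-a} \<mu>"
proof -
  have "norm (integral {a..t} (\<lambda>s. Sm (t - s) (y s)))
       \<le> integral {a..t} (\<lambda>s. \<mu> (t - s) * (exp (- B * (t - s)) * norm (y s)))"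
    by (rule conv_int(2)[OF a yc])
  also have "\<dots> \<le> integral {a..t} (\<lambda>s. Y * \<mu> (t - s))"
  proof (rule integral_le)
    show "(\<lambda>s. \<mu> (t - s) * (exp (- B * (t - s)) * norm (y s))) integrable_on {a..t}"
      by (rule conv_real_int[OF a]) (auto intro!: continuous_intros yc)
    show "(\<lambda>s. Y * \<mu> (t - s)) integrable_on {a..t}"
      by (intro integrable_on_mult_right mu_refl_int(1)[OF a(2)])
    fix s assume s: "s \<in> {a..t}"
    have "exp (- B * (t - s)) \<le> 1" using s B_nonneg by auto
    then have "exp (- B * (t - s)) * norm (y s) \<le> 1 * Y"
      using Y[OF s] by (intro mult_mono) auto
    then have "\<mu> (t - s) * (exp (- B * (t - s)) * norm (y s)) \<le> \<mu> (t - s) * Y"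
      using \<mu>_nonneg[of "t-s"] by (intro mult_left_mono) auto
    then show "\<mu> (t - s) * (exp (- B * (t - s)) * norm (y s)) \<le> Y * \<mu> (t - s)"
      by (simp add: mult.commute)
  qed
  also have "\<dots> = Y * integral {0..t-a} \<mu>"
    using mu_refl_int(2)[OF a(2)] by simp
  finally show ?thesis .
qed

lemma conv_cont:
  fixes y :: "real \<Rightarrow> 'm"
  assumes yc: "continuous_on {0..} y"
  shows "continuous_on {0..} (\<lambda>t. integral {0..t} (\<lambda>s. Sm (t - s) (y s)))"
  unfolding continuous_on_iff
proof (intro ballI allI impI)
  fix t0 e :: real assume t0: "t0 \<in> {0..}" and e: "0 < e"
  define I where "I t = integral {0..t} (\<lambda>s. Sm (t - s) (y s))" for t
  have "compact (y ` {0..t0+1})"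
    by (rule compact_continuous_image, rule continuous_on_subset[OF yc]) auto
  then obtain Y where Y: "Y > 0" "\<And>s. s \<in> {0..t0+1} \<Longrightarrow> norm (y s) \<le> Y"
    by (metis compact_imp_bounded bounded_pos imageI)
  obtain \<eta>' where \<eta>': "\<eta>' > 0" "\<eta>' \<le> 1" "\<And>x. 0 \<le> x \<Longrightarrow> x \<le> \<eta>' \<Longrightarrow> integral {0..x} \<mu> < e / (3 * Y)"
    using Mu_small[of "e / (3 * Y)"] e Y(1) by auto
  define \<eta> where "\<eta> = \<eta>' / 2"
  have \<eta>: "\<eta> > 0" "\<eta> \<le> 1/2"
    using \<eta>' by (auto simp: \<eta>_def)
  have small: "Y * integral {0..x} \<mu> < e / 3" if "0 \<le> x" "x \<le> 2 * \<eta>" for x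
  proof -
    have "integral {0..x} \<mu> < e / (3 * Y)" using \<eta>'(3)[of x] that by (simp add: \<eta>_def)
    then have "Y * integral {0..x} \<mu> < Y * (e / (3 * Y))"
      using Y(1) by (intro mult_strict_left_mono) auto
    then show ?thesis using Y(1) by simp
  qed
  have tail: "norm (integral {a..t} (\<lambda>s. Sm (t - s) (y s))) \<le> Y * integral {0..t-a} \<mu>"
    if "0 \<le> a" "a \<le> t" "t \<le> t0+1" for a t
    by (rule conv_tail) (use that in \<open>auto intro: Y(2) continuous_on_subset[OF yc]\<close>)
  have Ii: "(\<lambda>s. Sm (t - s) (y s)) integrable_on {0..t}" if "0 \<le> t" for t
    by (rule conv_int(1)) (use that in \<open>auto intro: continuous_on_subset[OF yc]\<close>)
  show "\<exists>d>0. \<forall>t'\<in>{0..}. dist t' t0 < d \<longrightarrow> dist (I t') (I t0) < e"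
  proof (cases "t0 \<le> \<eta>")
    case True
    show ?thesis
    proof (intro exI[of _ \<eta>] conjI ballI impI)
      fix t' assume t': "t' \<in> {0..}" "dist t' t0 < \<eta>"
      then have t'b: "0 \<le> t'" "t' \<le> 2 * \<eta>" using True by (auto simp: dist_real_def)
      have n1: "norm (I t') < e / 3"
        using tail[of 0 t'] small[of t'] t'b \<eta> t0 unfolding I_def by force
      have n2: "norm (I t0) < e / 3"
        using tail[of 0 t0] small[of t0] True \<eta> t0 unfolding I_def by force
      have "dist (I t') (I t0) \<le> norm (I t') + norm (I t0)"
        by (simp add: dist_norm norm_triangle_ineq4)
      also have "\<dots> < e" using n1 n2 e by linarith
      finally show "dist (I t') (I t0) < e" .
    qed (use \<eta> in auto)
  next
    case False
    define a where "a = t0 - \<eta>"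
    have a: "0 < a" "a < t0" using False \<eta> by (auto simp: a_def)
    define P where "P t = integral (cbox 0 a) (\<lambda>s. Sm (t - s) (y s))" for t
    define U where "U = {t0 - \<eta>/2..t0+\<eta>}"
    have "continuous_on U P"
      unfolding P_def
    proof (rule integral_continuous_on_param)
      have "continuous_on (U \<times> cbox 0 a) (\<lambda>p. (\<lambda>(g, t). Sm t g) (y (snd p), fst p - snd p))"
      proof (rule continuous_on_compose2[OF Sm_cont])
        show "continuous_on (U \<times> cbox 0 a) (\<lambda>p. (y (snd p), fst p - snd p))"
          by (intro continuous_intros continuous_on_compose2[OF yc])
             (use a in \<open>auto simp: cbox_interval\<close>)
        show "(\<lambda>p. (y (snd p), fst p - snd p)) ` (U \<times> cbox 0 a) \<subseteq> UNIV \<times> {0<..}"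
          using \<eta> by (auto simp: U_def a_def cbox_interval)
      qed
      then show "continuous_on (U \<times> cbox 0 a) (\<lambda>(x, t). Sm (x - t) (y t))"
        by (simp add: case_prod_beta)
    qed
    moreover have "t0 \<in> U" using \<eta> by (auto simp: U_def)
    ultimately obtain d' where d': "d' > 0" "\<And>t. t \<in> U \<Longrightarrow> dist t t0 < d' \<Longrightarrow> dist (P t) (P t0) < e / 3"
      unfolding continuous_on_iff using e by (metis divide_pos_pos zero_less_numeral)
    have split: "I t = P t + integral {a..t} (\<lambda>s. Sm (t - s) (y s))" if "a \<le> t" for t
      unfolding I_def P_def cbox_interval
      using Henstock_Kurzweil_Integration.integral_combine[OF _ that Ii[of t]] a that by simp
    show ?thesis
    proof (intro exI[of _ "min d' (\<eta>/2)"] conjI ballI impI)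
      fix t' assume t': "t' \<in> {0..}" "dist t' t0 < min d' (\<eta>/2)"
      then have ab0: "\<bar>t' - t0\<bar> < \<eta>/2" and dt: "dist t' t0 < d'"
        by (auto simp: dist_real_def)
      then have ab1: "t' - t0 < \<eta>/2" "t0 - t' < \<eta>/2"
        by arith+
      then have t'U: "t' \<in> U" and t'a: "a \<le> t'" and t'b: "t' \<le> t0 + 1"
        using \<eta> by (auto simp: U_def a_def)
      have n1: "norm (integral {a..t'} (\<lambda>s. Sm (t' - s) (y s))) < e / 3"
        using tail[of a t'] small[of "t' - a"] t'a t'b a t' \<eta> by (force simp: a_def dist_real_def)
      have n2: "norm (integral {a..t0} (\<lambda>s. Sm (t0 - s) (y s))) < e / 3"
        using tail[of a t0] small[of "t0 - a"] a \<eta> by (force simp: a_def)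
      have n3: "dist (P t') (P t0) < e / 3" using d'(2)[OF t'U dt] .
      have "dist (I t') (I t0) = norm ((P t' - P t0) + (integral {a..t'} (\<lambda>s. Sm (t' - s) (y s))
              - integral {a..t0} (\<lambda>s. Sm (t0 - s) (y s))))"
        using split[OF t'a] split[of t0] a by (simp add: dist_norm algebra_simps)
      also have "\<dots> \<le> dist (P t') (P t0) + norm (integral {a..t'} (\<lambda>s. Sm (t' - s) (y s)))
              + norm (integral {a..t0} (\<lambda>s. Sm (t0 - s) (y s)))"
        using norm_triangle_ineq[of "P t' - P t0" "integral {a..t'} (\<lambda>s. Sm (t' - s) (y s))
              - integral {a..t0} (\<lambda>s. Sm (t0 - s) (y s))"]
          norm_triangle_ineq4[of "integral {a..t'} (\<lambda>s. Sm (t' - s) (y s))"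
              "integral {a..t0} (\<lambda>s. Sm (t0 - s) (y s))"]
        by (simp add: dist_norm)
      also have "\<dots> < e" using n1 n2 n3 by simp
      finally show "dist (I t') (I t0) < e" .
    qed (use d' \<eta> in auto)
  qed
qed

lemma J_bound:
  "\<exists>lam\<ge>0. \<forall>t\<ge>0. integral {0..t} (\<lambda>s. \<mu> (t - s) * (exp (- lam * (t - s)) * exp (- B * s))) \<le> N / 2"
proof -
  obtain r0 where r0: "r0 > 0" "r0 \<le> 1" "\<And>x. 0 \<le> x \<Longrightarrow> x \<le> r0 \<Longrightarrow> integral {0..x} \<mu> < N / 4"
    using Mu_small[of "N/4"] N_pos by auto
  define lam where "lam = ln 4 / r0"
  have lam: "lam \<ge> 0" using r0 by (simp add: lam_def)
  have ex: "exp (- lam * r) \<le> 1/4" if "r \<ge> r0" for r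
  proof -
    have "exp (- lam * r) \<le> exp (- lam * r0)" using that lam by (simp add: mult_left_mono)
    also have "- lam * r0 = - ln 4" using r0 by (simp add: lam_def)
    also have "exp (- ln 4) = (1/4::real)" by (simp add: exp_minus)
    finally show ?thesis .
  qed
  show ?thesis
  proof (intro exI[of _ lam] conjI allI impI lam)
    fix t :: real assume t: "t \<ge> 0"
    define f where "f s = \<mu> (t - s) * (exp (- lam * (t - s)) * exp (- B * s))" for s
    have fi: "f integrable_on {a..t}" if "0 \<le> a" "a \<le> t" for a
      unfolding f_def by (rule conv_real_int[OF that]) (auto intro!: continuous_intros)
    have f_le: "f s \<le> \<mu> (t - s)" if "s \<in> {0..t}" for s
    proof -
      have "exp (- lam * (t - s)) * exp (- B * s) \<le> 1 * 1"
        using that lam B_nonneg by (intro mult_mono) auto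
      then show ?thesis unfolding f_def using \<mu>_nonneg[of "t-s"]
        by (metis mult.right_neutral mult_left_mono)
    qed
    show "integral {0..t} f \<le> N / 2"
    proof (cases "t \<le> r0")
      case True
      have "integral {0..t} f \<le> integral {0..t} (\<lambda>s. \<mu> (t - s))"
        by (rule integral_le[OF fi mu_refl_int(1)]) (use t f_le in auto)
      also have "\<dots> = integral {0..t} \<mu>" using mu_refl_int(2)[OF t] by simp
      also have "\<dots> < N / 4" using r0(3)[OF t True] .
      finally show ?thesis using N_pos by simp
    next
      case False
      define a where "a = t - r0"
      have a: "0 < a" "a \<le> t" using False r0 by (auto simp: a_def)
      define g where "g s = \<mu> (t - s) * exp (- B * s)" for s
      have gi: "g integrable_on {c..t}" if "0 \<le> c" "c \<le> t" for c
        unfolding g_def by (rule conv_real_int[OF that]) (auto intro!: continuous_intros)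
      have gi0: "g integrable_on {0..a}"
        using integrable_subinterval_real[OF gi[of 0]] a by simp
      have fi0: "f integrable_on {0..a}"
        using integrable_subinterval_real[OF fi[of 0]] a by simp
      have c1: "integral {0..a} f \<le> integral {0..a} (\<lambda>s. 1/4 * g s)"
      proof (rule integral_le[OF fi0])
        show "(\<lambda>s. 1/4 * g s) integrable_on {0..a}" by (intro integrable_on_mult_right gi0)
        fix s assume s: "s \<in> {0..a}"
        have "exp (- lam * (t - s)) \<le> 1/4" using s by (intro ex) (auto simp: a_def)
        then have "exp (- lam * (t - s)) * exp (- B * s) \<le> 1/4 * exp (- B * s)"
          by (intro mult_right_mono) auto
        then show "f s \<le> 1/4 * g s" unfolding f_def g_def using \<mu>_nonneg[of "t-s"]
          by (metis (no_types, opaque_lifting) mult.left_commute mult_left_mono)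
      qed
      have "integral {0..a} g \<le> integral {0..a} g + integral {a..t} g"
        using Henstock_Kurzweil_Integration.integral_nonneg[OF gi[OF _ a(2)]] a \<mu>_nonneg
        by (simp add: g_def)
      also have "\<dots> = integral {0..t} g"
        using Henstock_Kurzweil_Integration.integral_combine[OF _ a(2) gi[of 0]] a by simp
      also have "\<dots> \<le> N" using \<mu>_int[OF t] by (simp add: g_def[abs_def])
      finally have c2: "integral {0..a} g \<le> N" .
      have c3: "integral {a..t} f \<le> integral {a..t} (\<lambda>s. \<mu> (t - s))"
        by (rule integral_le[OF fi mu_refl_int(1)]) (use a f_le in auto)
      have c4: "integral {a..t} (\<lambda>s. \<mu> (t - s)) < N / 4"
        using mu_refl_int(2)[OF a(2)] r0(3)[of "t - a"] a by (simp add: a_def)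
      have "integral {0..t} f = integral {0..a} f + integral {a..t} f"
        using Henstock_Kurzweil_Integration.integral_combine[OF _ a(2) fi[of 0]] a by simp
      also have "\<dots> \<le> 1/4 * integral {0..a} g + N / 4"
        using c1 c3 c4 by simp
      also have "\<dots> \<le> N / 2" using c2 by simp
      finally show ?thesis .
    qed
  qed
qed

end



lemma geo_small:
  fixes A e :: real
  assumes "0 \<le> A" "e > 0"
  shows "\<exists>M. \<forall>n\<ge>M. A * (1/2) ^ n < e"
proof -
  have "(\<lambda>n. A * (1/2::real) ^ n) \<longlonglongrightarrow> A * 0"
    by (intro tendsto_mult tendsto_const LIMSEQ_power_zero) simp
  then have "eventually (\<lambda>n. A * (1/2::real) ^ n < e) sequentially"
    using assms by (intro order_tendstoD(2)) auto
  then show ?thesis by (simp add: eventually_sequentially)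
qed

locale main_setting = setting iF T SF Sm B N K \<sigma> \<mu> Pb \<xi>
  for iF :: "'f::banach \<Rightarrow> 'm::banach" and T SF Sm B N K \<sigma> \<mu> Pb \<xi> +
  fixes f0 :: 'f and \<phi>ap :: "real \<Rightarrow> 'f" and E D :: real
  assumes \<phi>ap_cont: "continuous_on {0..} \<phi>ap" and E_nonneg: "E \<ge> 0" and D_nonneg: "D \<ge> 0"
    and err: "\<And>t. t \<ge> 0 \<Longrightarrow> norm (\<phi>ap t - SF t f0
                 - integral {0..t} (\<lambda>s. Sm (t - s) (Pb (\<phi>ap s) (\<phi>ap s) + \<xi> s))) \<le> E * exp (- B * t)"
    and ap: "\<And>t. t \<ge> 0 \<Longrightarrow> norm (\<phi>ap t) \<le> D * exp (- B * t)"
    and small: "2 * sqrt (K * N * E) + 2 * K * N * D \<le> 1"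
begin

definition R where "R = (1 - 2 * K * N * D - sqrt ((1 - 2 * K * N * D)\<^sup>2 - 4 * K * N * E)) / (2 * K * N)"

lemma R_props: "R \<ge> 0" "E + K * N * (2 * D * R + R\<^sup>2) = R" "2 * K * N * (D + R) \<le> 1"
proof -
  define q where "q = 1 - 2*K*N*D"
  define s where "s = sqrt (q\<^sup>2 - 4*K*N*E)"
  have KN: "K * N > 0" using K_pos N_pos by simp
  have KNE: "K*N*E \<ge> 0" using K_pos N_pos E_nonneg by (metis mult_nonneg_nonneg less_imp_le)
  have q: "2 * sqrt (K*N*E) \<le> q" using small by (simp add: q_def)
  have q0: "q \<ge> 0" using q real_sqrt_ge_zero[OF KNE] by linarith
  have "(2 * sqrt (K*N*E))\<^sup>2 \<le> q\<^sup>2" using q KNE by (intro power_mono) auto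
  moreover have "(2 * sqrt (K*N*E))\<^sup>2 = 4*K*N*E"
    using KNE by (simp add: power_mult_distrib mult.assoc)
  ultimately have d0: "4*K*N*E \<le> q\<^sup>2" by metis
  have s0: "s \<ge> 0" using d0 by (simp add: s_def)
  have s2: "s * s = q * q - 4*K*N*E" using d0 by (simp add: s_def power2_eq_square[symmetric])
  have "s\<^sup>2 \<le> q\<^sup>2" using s2 KNE by (simp add: power2_eq_square mult.commute mult.left_commute)
  then have sq: "s \<le> q" using q0 by (rule power2_le_imp_le)
  have R: "R = (q - s)/(2*K*N)" by (simp add: R_def q_def s_def)
  have RK: "2*K*N*R = q - s" using K_pos N_pos by (simp add: R)
  show "R \<ge> 0" using sq KN by (simp add: R)
  have "4*K*N*(K*N*R\<^sup>2 - q*R + E) = (2*K*N*R) * (2*K*N*R) - 2*q*(2*K*N*R) + 4*K*N*E"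
    by (simp add: algebra_simps power2_eq_square)
  also have "\<dots> = 0" unfolding RK using s2 by (simp add: algebra_simps)
  finally have h: "K*N*R\<^sup>2 - q*R + E = 0" using K_pos N_pos by simp
  then show "E + K * N * (2 * D * R + R\<^sup>2) = R"
    by (simp add: q_def algebra_simps)
  show "2 * K * N * (D + R) \<le> 1"
    using RK s0 by (simp add: q_def distrib_left)
qed

definition Phi where "Phi \<phi> t = SF t f0 + integral {0..t} (\<lambda>s. Sm (t - s) (Pb (\<phi> s) (\<phi> s) + \<xi> s))"

definition inball where
  "inball \<phi> \<longleftrightarrow> continuous_on {0..} \<phi> \<and> (\<forall>t\<ge>0. norm (\<phi> t - \<phi>ap t) \<le> R * exp (- B * t))"

lemma Pb_bb: "bounded_bilinear Pb"
proof (rule bounded_bilinear.intro)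
  show "\<exists>Ka. \<forall>a b. norm (Pb a b) \<le> norm a * norm b * Ka"
    using Pb_bound by (intro exI[of _ K]) (simp add: mult.commute mult.left_commute)
qed (simp_all add: bilinear_ladd[OF Pb_bil] bilinear_radd[OF Pb_bil]
      bilinear_lmul[OF Pb_bil] bilinear_rmul[OF Pb_bil])

lemma y_cont: "continuous_on {0..} \<phi> \<Longrightarrow> continuous_on {0..} (\<lambda>s. Pb (\<phi> s) (\<phi> s) + \<xi> s)"
  by (intro continuous_on_add bounded_bilinear.continuous_on[OF Pb_bb] \<xi>_cont)

lemma Phi_cont: "continuous_on {0..} \<phi> \<Longrightarrow> continuous_on {0..} (Phi \<phi>)"
proof -
  assume c: "continuous_on {0..} \<phi>"
  have "continuous_on {0..} (\<lambda>t. (\<lambda>(f, t). SF t f) (f0, t))"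
    by (rule continuous_on_compose2[OF SF_cont]) (auto intro!: continuous_intros)
  then have "continuous_on {0..} (\<lambda>t. SF t f0)" by simp
  then show ?thesis unfolding Phi_def[abs_def]
    by (intro continuous_on_add conv_cont y_cont c)
qed

lemma Phi_int: "continuous_on {0..} \<phi> \<Longrightarrow> t \<ge> 0 \<Longrightarrow>
   (\<lambda>s. Sm (t - s) (Pb (\<phi> s) (\<phi> s) + \<xi> s)) integrable_on {0..t}"
  by (rule conv_int(1)) (auto intro: continuous_on_subset[OF y_cont])

lemma key_bound:
  fixes y1 y2 :: "real \<Rightarrow> 'm"
  assumes c1: "continuous_on {0..} y1" and c2: "continuous_on {0..} y2" and t: "t \<ge> 0"
    and wc: "continuous_on {0..t} w"
    and le: "\<And>s. s \<in> {0..t} \<Longrightarrow> norm (y1 s - y2 s) \<le> w s"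
  shows "norm (integral {0..t} (\<lambda>s. Sm (t - s) (y1 s)) - integral {0..t} (\<lambda>s. Sm (t - s) (y2 s)))
         \<le> integral {0..t} (\<lambda>s. \<mu> (t - s) * (exp (- B * (t - s)) * w s))"
proof -
  have c1': "continuous_on {0..t} y1" by (rule continuous_on_subset[OF c1]) auto
  have c2': "continuous_on {0..t} y2" by (rule continuous_on_subset[OF c2]) auto
  have "integral {0..t} (\<lambda>s. Sm (t - s) (y1 s)) - integral {0..t} (\<lambda>s. Sm (t - s) (y2 s))
      = integral {0..t} (\<lambda>s. Sm (t - s) (y1 s) - Sm (t - s) (y2 s))"
    by (rule Henstock_Kurzweil_Integration.integral_diff[symmetric])
       (auto intro: conv_int(1)[OF _ _ c1'] conv_int(1)[OF _ _ c2'] t)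
  also have "\<dots> = integral {0..t} (\<lambda>s. Sm (t - s) (y1 s - y2 s))"
    by (rule integral_spike[of "{t}"]) (auto simp: Sm_diff)
  finally have eq: "integral {0..t} (\<lambda>s. Sm (t - s) (y1 s)) - integral {0..t} (\<lambda>s. Sm (t - s) (y2 s))
      = integral {0..t} (\<lambda>s. Sm (t - s) (y1 s - y2 s))" .
  have c12: "continuous_on {0..t} (\<lambda>s. y1 s - y2 s)" by (intro continuous_intros c1' c2')
  have "norm (integral {0..t} (\<lambda>s. Sm (t - s) (y1 s - y2 s)))
      \<le> integral {0..t} (\<lambda>s. \<mu> (t - s) * (exp (- B * (t - s)) * norm (y1 s - y2 s)))"
    by (rule conv_int(2)[OF _ t c12]) simp
  also have "\<dots> \<le> integral {0..t} (\<lambda>s. \<mu> (t - s) * (exp (- B * (t - s)) * w s))"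
  proof (rule integral_le)
    show "(\<lambda>s. \<mu> (t - s) * (exp (- B * (t - s)) * norm (y1 s - y2 s))) integrable_on {0..t}"
      by (rule conv_real_int[OF _ t]) (auto intro!: continuous_intros c12)
    show "(\<lambda>s. \<mu> (t - s) * (exp (- B * (t - s)) * w s)) integrable_on {0..t}"
      by (rule conv_real_int[OF _ t]) (auto intro!: continuous_intros wc)
    fix s assume s: "s \<in> {0..t}"
    show "\<mu> (t - s) * (exp (- B * (t - s)) * norm (y1 s - y2 s)) \<le> \<mu> (t - s) * (exp (- B * (t - s)) * w s)"
      using le[OF s] \<mu>_nonneg[of "t - s"] by (intro mult_left_mono) auto
  qed
  finally show ?thesis unfolding eq .
qed

lemma inball_norm: "inball \<phi> \<Longrightarrow> t \<ge> 0 \<Longrightarrow> norm (\<phi> t) \<le> (D + R) * exp (- B * t)"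
proof -
  assume b: "inball \<phi>" and t: "t \<ge> 0"
  have "norm (\<phi> t) \<le> norm (\<phi> t - \<phi>ap t) + norm (\<phi>ap t)"
    using norm_triangle_ineq[of "\<phi> t - \<phi>ap t" "\<phi>ap t"] by simp
  also have "\<dots> \<le> R * exp (- B * t) + D * exp (- B * t)"
    using b t ap[OF t] unfolding inball_def by (intro add_mono) auto
  finally show ?thesis by (simp add: algebra_simps)
qed

lemma Pb_diff_bound:
  assumes "norm (a - b) \<le> x" "norm a \<le> u" "norm b \<le> v"
  shows "norm (Pb a a - Pb b b) \<le> K * x * u + K * v * x"
proof -
  interpret bb: bounded_bilinear Pb by (rule Pb_bb)
  have x0: "0 \<le> x" "0 \<le> v" using assms by (auto intro: order_trans[OF norm_ge_zero])
  have "Pb a a - Pb b b = Pb (a - b) a + Pb b (a - b)"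
    by (simp add: bb.diff_left bb.diff_right)
  then have "norm (Pb a a - Pb b b) \<le> norm (Pb (a - b) a) + norm (Pb b (a - b))"
    by (simp add: norm_triangle_ineq)
  also have "\<dots> \<le> K * norm (a - b) * norm a + K * norm b * norm (a - b)"
    by (intro add_mono Pb_bound)
  also have "\<dots> \<le> K * x * u + K * v * x"
    using assms K_pos x0
    by (intro add_mono mult_mono mult_left_mono) (auto intro: order_trans[OF norm_ge_zero])
  finally show ?thesis .
qed

lemma exp_comb: "exp (a::real) * exp b = exp (a + b)" by (rule exp_add[symmetric])

lemma inball_Phi:
  assumes b: "inball \<phi>"
  shows "inball (Phi \<phi>)"
  unfolding inball_def
proof (intro conjI allI impI)
  have c: "continuous_on {0..} \<phi>" using b by (simp add: inball_def)
  show "continuous_on {0..} (Phi \<phi>)" by (rule Phi_cont[OF c])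
  fix t :: real assume t: "t \<ge> 0"
  define C where "C = K * (2 * D * R + R\<^sup>2)"
  have C0: "C \<ge> 0" using K_pos D_nonneg R_props(1) by (simp add: C_def)
  define w where "w s = C * (exp (- B * s) * exp (- B * s))" for s
  have wc: "continuous_on {0..t} w" unfolding w_def by (intro continuous_intros)
  let ?y1 = "\<lambda>s. Pb (\<phi> s) (\<phi> s) + \<xi> s" and ?y2 = "\<lambda>s. Pb (\<phi>ap s) (\<phi>ap s) + \<xi> s"
  have le: "norm (?y1 s - ?y2 s) \<le> w s" if s: "s \<in> {0..t}" for s
  proof -
    have "norm (?y1 s - ?y2 s) = norm (Pb (\<phi> s) (\<phi> s) - Pb (\<phi>ap s) (\<phi>ap s))" by simp
    also have "\<dots> \<le> K * (R * exp (- B * s)) * ((D + R) * exp (- B * s))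
                   + K * (D * exp (- B * s)) * (R * exp (- B * s))"
      by (rule Pb_diff_bound) (use b s inball_norm[OF b] ap in \<open>auto simp: inball_def\<close>)
    also have "\<dots> = w s" by (simp add: w_def C_def algebra_simps power2_eq_square)
    finally show ?thesis .
  qed
  have I: "norm (integral {0..t} (\<lambda>s. Sm (t - s) (?y1 s)) - integral {0..t} (\<lambda>s. Sm (t - s) (?y2 s)))
         \<le> integral {0..t} (\<lambda>s. \<mu> (t - s) * (exp (- B * (t - s)) * w s))"
    by (rule key_bound[OF y_cont[OF c] y_cont[OF \<phi>ap_cont] t wc le])
  also have "\<dots> = integral {0..t} (\<lambda>s. (C * exp (- B * t)) * (\<mu> (t - s) * exp (- B * s)))"
  proof (rule integral_cong)
    fix s assume "s \<in> {0..t}"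
    have "exp (- B * (t - s)) * (exp (- B * s) * exp (- B * s)) = exp (- B * t) * exp (- B * s)"
      by (simp add: exp_comb algebra_simps)
    then show "\<mu> (t - s) * (exp (- B * (t - s)) * w s) = (C * exp (- B * t)) * (\<mu> (t - s) * exp (- B * s))"
      unfolding w_def by (metis (no_types, lifting) mult.assoc mult.left_commute)
  qed
  also have "\<dots> = (C * exp (- B * t)) * integral {0..t} (\<lambda>s. \<mu> (t - s) * exp (- B * s))"
    by simp
  also have "\<dots> \<le> (C * exp (- B * t)) * N"
    using \<mu>_int[OF t] C0 by (intro mult_left_mono) auto
  finally have I2: "norm (integral {0..t} (\<lambda>s. Sm (t - s) (?y1 s)) - integral {0..t} (\<lambda>s. Sm (t - s) (?y2 s)))
      \<le> C * N * exp (- B * t)" by (simp add: algebra_simps)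
  define X where "X = integral {0..t} (\<lambda>s. Sm (t - s) (?y1 s)) - integral {0..t} (\<lambda>s. Sm (t - s) (?y2 s))"
  define Y where "Y = \<phi>ap t - SF t f0 - integral {0..t} (\<lambda>s. Sm (t - s) (?y2 s))"
  have eqn: "Phi \<phi> t - \<phi>ap t = X - Y"
    by (simp add: Phi_def X_def Y_def algebra_simps)
  have "norm (Phi \<phi> t - \<phi>ap t) \<le> norm X + norm Y" unfolding eqn by (rule norm_triangle_ineq4)
  then have "norm (Phi \<phi> t - \<phi>ap t) \<le> C * N * exp (- B * t) + E * exp (- B * t)"
    using I2 err[OF t] unfolding X_def Y_def by linarith
  also have "\<dots> = (E + K * N * (2 * D * R + R\<^sup>2)) * exp (- B * t)"
    by (simp add: C_def algebra_simps)
  also have "\<dots> = R * exp (- B * t)"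
    using R_props(2) by simp
  finally show "norm (Phi \<phi> t - \<phi>ap t) \<le> R * exp (- B * t)" .
qed

definition lam where
  "lam = (SOME l. l \<ge> 0 \<and> (\<forall>t\<ge>0. integral {0..t} (\<lambda>s. \<mu> (t - s) * (exp (- l * (t - s)) * exp (- B * s))) \<le> N / 2))"

lemma lam_props: "lam \<ge> 0"
  "\<And>t. t \<ge> 0 \<Longrightarrow> integral {0..t} (\<lambda>s. \<mu> (t - s) * (exp (- lam * (t - s)) * exp (- B * s))) \<le> N / 2"
  using someI_ex[OF J_bound] unfolding lam_def by auto

lemma contraction:
  assumes b1: "inball \<phi>1" and b2: "inball \<phi>2" and d: "d \<ge> 0"
    and le: "\<And>s. s \<ge> 0 \<Longrightarrow> norm (\<phi>1 s - \<phi>2 s) \<le> d * exp ((lam - B) * s)"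
    and t: "t \<ge> 0"
  shows "norm (Phi \<phi>1 t - Phi \<phi>2 t) \<le> d / 2 * exp ((lam - B) * t)"
proof -
  have c1: "continuous_on {0..} \<phi>1" using b1 by (simp add: inball_def)
  have c2: "continuous_on {0..} \<phi>2" using b2 by (simp add: inball_def)
  define C where "C = 2 * K * (D + R) * d"
  have C0: "C \<ge> 0" using K_pos D_nonneg R_props(1) d by (simp add: C_def)
  define w where "w s = C * (exp ((lam - B) * s) * exp (- B * s))" for s
  have wc: "continuous_on {0..t} w" unfolding w_def by (intro continuous_intros)
  let ?y1 = "\<lambda>s. Pb (\<phi>1 s) (\<phi>1 s) + \<xi> s" and ?y2 = "\<lambda>s. Pb (\<phi>2 s) (\<phi>2 s) + \<xi> s"
  have lew: "norm (?y1 s - ?y2 s) \<le> w s" if s: "s \<in> {0..t}" for s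
  proof -
    have "norm (?y1 s - ?y2 s) = norm (Pb (\<phi>1 s) (\<phi>1 s) - Pb (\<phi>2 s) (\<phi>2 s))" by simp
    also have "\<dots> \<le> K * (d * exp ((lam - B) * s)) * ((D + R) * exp (- B * s))
                   + K * ((D + R) * exp (- B * s)) * (d * exp ((lam - B) * s))"
      by (rule Pb_diff_bound) (use s inball_norm[OF b1] inball_norm[OF b2] le in auto)
    also have "\<dots> = w s" by (simp add: w_def C_def algebra_simps)
    finally show ?thesis .
  qed
  have "norm (Phi \<phi>1 t - Phi \<phi>2 t)
      = norm (integral {0..t} (\<lambda>s. Sm (t - s) (?y1 s)) - integral {0..t} (\<lambda>s. Sm (t - s) (?y2 s)))"
    by (simp add: Phi_def)
  also have "\<dots> \<le> integral {0..t} (\<lambda>s. \<mu> (t - s) * (exp (- B * (t - s)) * w s))"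
    by (rule key_bound[OF y_cont[OF c1] y_cont[OF c2] t wc lew])
  also have "\<dots> = integral {0..t} (\<lambda>s. (C * exp ((lam - B) * t)) * (\<mu> (t - s) * (exp (- lam * (t - s)) * exp (- B * s))))"
  proof (rule integral_cong)
    fix s assume "s \<in> {0..t}"
    have "exp (- B * (t - s)) * (exp ((lam - B) * s) * exp (- B * s))
        = exp ((lam - B) * t) * (exp (- lam * (t - s)) * exp (- B * s))"
      by (simp add: exp_comb algebra_simps)
    then show "\<mu> (t - s) * (exp (- B * (t - s)) * w s)
        = (C * exp ((lam - B) * t)) * (\<mu> (t - s) * (exp (- lam * (t - s)) * exp (- B * s)))"
      unfolding w_def by (metis (no_types, lifting) mult.assoc mult.left_commute)
  qed
  also have "\<dots> = (C * exp ((lam - B) * t)) * integral {0..t} (\<lambda>s. \<mu> (t - s) * (exp (- lam * (t - s)) * exp (- B * s)))"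
    by simp
  also have "\<dots> \<le> (C * exp ((lam - B) * t)) * (N / 2)"
    using lam_props(2)[OF t] C0 by (intro mult_left_mono) auto
  also have "\<dots> = (2 * K * N * (D + R)) * (d / 2 * exp ((lam - B) * t))"
    by (simp add: C_def algebra_simps)
  also have "\<dots> \<le> 1 * (d / 2 * exp ((lam - B) * t))"
    using R_props(3) d by (intro mult_right_mono) auto
  finally show ?thesis by simp
qed

end



context main_setting begin

lemma exists_fix: "\<exists>\<phi>. inball \<phi> \<and> (\<forall>t\<ge>0. Phi \<phi> t = \<phi> t)"
proof -
  define \<psi> where "\<psi> n = (Phi ^^ n) \<phi>ap" for n
  have \<psi>0: "\<psi> 0 = \<phi>ap" by (simp add: \<psi>_def)
  have \<psi>S: "\<psi> (Suc n) = Phi (\<psi> n)" for n by (simp add: \<psi>_def)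
  have ball0: "inball \<phi>ap" unfolding inball_def using \<phi>ap_cont R_props(1) by simp
  have ball\<psi>: "inball (\<psi> n)" for n by (induction n) (simp_all add: \<psi>0 \<psi>S ball0 inball_Phi)
  define c where "c t = exp ((lam - B) * t)" for t
  have c_pos: "c t > 0" for t by (simp add: c_def)
  have step: "\<forall>t\<ge>0. norm (\<psi> (Suc n) t - \<psi> n t) \<le> R * (1/2)^n * c t" for n
  proof (induction n)
    case 0
    show ?case
    proof (intro allI impI)
      fix t :: real assume t: "t \<ge> 0"
      have "norm (\<psi> (Suc 0) t - \<psi> 0 t) \<le> R * exp (- B * t)"
        using inball_Phi[OF ball0] t by (simp add: \<psi>S \<psi>0 inball_def)
      also have "exp (- B * t) \<le> c t"
        using lam_props(1) t by (simp add: c_def algebra_simps)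
      then have "R * exp (- B * t) \<le> R * c t"
        using R_props(1) by (intro mult_left_mono) auto
      finally show "norm (\<psi> (Suc 0) t - \<psi> 0 t) \<le> R * (1/2)^0 * c t" by simp
    qed
  next
    case (Suc n)
    show ?case
    proof (intro allI impI)
      fix t :: real assume t: "t \<ge> 0"
      have "norm (Phi (\<psi> (Suc n)) t - Phi (\<psi> n) t) \<le> (R * (1/2)^n) / 2 * exp ((lam - B) * t)"
        by (rule contraction[OF ball\<psi> ball\<psi> _ _ t]) (use Suc.IH R_props(1) in \<open>auto simp: c_def\<close>)
      moreover have "(R * (1/2::real)^n) / 2 * exp ((lam - B) * t) = R * (1/2)^(Suc n) * c t"
        by (simp add: c_def)
      moreover have "\<psi> (Suc (Suc n)) t - \<psi> (Suc n) t = Phi (\<psi> (Suc n)) t - Phi (\<psi> n) t"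
        by (simp only: \<psi>S)
      ultimately show "norm (\<psi> (Suc (Suc n)) t - \<psi> (Suc n) t) \<le> R * (1/2)^(Suc n) * c t"
        by metis
    qed
  qed
  have tele: "\<forall>t\<ge>0. norm (\<psi> (n + k) t - \<psi> n t) \<le> 2 * R * ((1/2)^n - (1/2)^(n+k)) * c t" for n k
  proof (induction k)
    case 0 then show ?case by simp
  next
    case (Suc k)
    show ?case
    proof (intro allI impI)
      fix t :: real assume t: "t \<ge> 0"
      have h2: "(1/2::real)^(n + Suc k) = (1/2)^(n+k) / 2" by simp
      have eq3: "R * (1/2)^(n+k) * c t + 2 * R * ((1/2)^n - (1/2)^(n+k)) * c t
          = 2 * R * ((1/2)^n - (1/2)^(n + Suc k)) * c t"
        unfolding h2 by (simp add: field_simps)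
      have "norm (\<psi> (n + Suc k) t - \<psi> n t)
          \<le> norm (\<psi> (Suc (n + k)) t - \<psi> (n + k) t) + norm (\<psi> (n + k) t - \<psi> n t)"
        using norm_triangle_ineq[of "\<psi> (Suc (n+k)) t - \<psi> (n+k) t" "\<psi> (n+k) t - \<psi> n t"] by simp
      also have "\<dots> \<le> R * (1/2)^(n+k) * c t + 2 * R * ((1/2)^n - (1/2)^(n+k)) * c t"
        using step[of "n+k"] Suc.IH t by (intro add_mono) auto
      also have "\<dots> = 2 * R * ((1/2)^n - (1/2)^(n + Suc k)) * c t" by (rule eq3)
      finally show "norm (\<psi> (n + Suc k) t - \<psi> n t) \<le> 2 * R * ((1/2)^n - (1/2)^(n + Suc k)) * c t" .
    qed
  qed
  have tele': "norm (\<psi> m t - \<psi> n t) \<le> 2 * R * (1/2)^n * c t" if "n \<le> m" "t \<ge> 0" for m n t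
  proof -
    define k where "k = m - n"
    have k: "m = n + k" using that(1) by (simp add: k_def)
    have "norm (\<psi> m t - \<psi> n t) \<le> 2 * R * ((1/2)^n - (1/2)^(n+k)) * c t"
      unfolding k using tele[of n k] that(2) by simp
    also have "\<dots> \<le> 2 * R * (1/2)^n * c t"
      using R_props(1) c_pos[of t] by (intro mult_right_mono mult_left_mono) auto
    finally show ?thesis .
  qed
  have cauchy: "Cauchy (\<lambda>n. \<psi> n t)" if t: "t \<ge> 0" for t
  proof (rule CauchyI)
    fix e :: real assume e: "e > 0"
    obtain M where M: "\<forall>n\<ge>M. (2 * R * c t) * (1/2)^n < e"
      using geo_small[of "2 * R * c t" e] R_props(1) c_pos[of t] e by auto
    show "\<exists>M. \<forall>m\<ge>M. \<forall>n\<ge>M. norm (\<psi> m t - \<psi> n t) < e"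
    proof (intro exI[of _ M] allI impI)
      fix m n assume mn: "M \<le> m" "M \<le> n"
      show "norm (\<psi> m t - \<psi> n t) < e"
      proof (cases "n \<le> m")
        case True
        have "norm (\<psi> m t - \<psi> n t) \<le> 2 * R * (1/2)^n * c t" using tele'[OF True t] .
        also have "\<dots> = (2 * R * c t) * (1/2)^n" by (simp add: ac_simps)
        also have "\<dots> < e" using M mn by auto
        finally show ?thesis .
      next
        case False
        have "norm (\<psi> m t - \<psi> n t) = norm (\<psi> n t - \<psi> m t)" by (rule norm_minus_commute)
        also have "\<dots> \<le> 2 * R * (1/2)^m * c t" using tele'[of m n t] False t by simp
        also have "\<dots> = (2 * R * c t) * (1/2)^m" by (simp add: ac_simps)
        also have "\<dots> < e" using M mn by auto
        finally show ?thesis .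
      qed
    qed
  qed
  define \<phi> where "\<phi> t = lim (\<lambda>n. \<psi> n t)" for t
  have conv: "(\<lambda>n. \<psi> n t) \<longlonglongrightarrow> \<phi> t" if "t \<ge> 0" for t
    using cauchy[OF that] unfolding \<phi>_def by (simp add: Cauchy_convergent_iff convergent_LIMSEQ_iff)
  have bnd: "norm (\<psi> n t - \<phi> t) \<le> 2 * R * (1/2)^n * c t" if "t \<ge> 0" for n t
  proof -
    have "(\<lambda>m. norm (\<psi> m t - \<psi> n t)) \<longlonglongrightarrow> norm (\<phi> t - \<psi> n t)"
      by (intro tendsto_norm tendsto_diff conv[OF that] tendsto_const)
    then have "norm (\<phi> t - \<psi> n t) \<le> 2 * R * (1/2)^n * c t"
      by (rule LIMSEQ_le_const2) (use tele' that in blast)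
    then show ?thesis by (simp add: norm_minus_commute)
  qed
  have \<phi>c: "continuous_on {0..} \<phi>"
  proof (rule cont_glue)
    fix T :: real assume T: "T \<ge> 0"
    show "continuous_on {0..T} \<phi>"
    proof (rule uniform_limit_theorem[where F=sequentially and f=\<psi>])
      show "\<forall>\<^sub>F n in sequentially. continuous_on {0..T} (\<psi> n)"
      proof (rule always_eventually, rule allI)
        fix n
        have "continuous_on {0..} (\<psi> n)" using ball\<psi>[of n] by (simp add: inball_def)
        then show "continuous_on {0..T} (\<psi> n)" by (rule continuous_on_subset) auto
      qed
      show "uniform_limit {0..T} \<psi> \<phi> sequentially"
      proof (rule uniform_limitI)
        fix e :: real assume e: "0 < e"
        define CT where "CT = exp (\<bar>lam - B\<bar> * T)"
        have cT: "c t \<le> CT" if "t \<in> {0..T}" for t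
        proof -
          have "(lam - B) * t \<le> \<bar>lam - B\<bar> * t" using that by (intro mult_right_mono) auto
          also have "\<dots> \<le> \<bar>lam - B\<bar> * T" using that by (intro mult_left_mono) auto
          finally show ?thesis by (simp add: c_def CT_def)
        qed
        obtain M where M: "\<forall>n\<ge>M. (2 * R * CT) * (1/2)^n < e"
          using geo_small[of "2 * R * CT" e] R_props(1) e by (auto simp: CT_def)
        show "\<forall>\<^sub>F n in sequentially. \<forall>x\<in>{0..T}. dist (\<psi> n x) (\<phi> x) < e"
          unfolding eventually_sequentially
        proof (intro exI[of _ M] allI impI ballI)
          fix n x assume n: "M \<le> n" and x: "x \<in> {0..T}"
          have "dist (\<psi> n x) (\<phi> x) \<le> 2 * R * (1/2)^n * c x" using bnd[of x n] x by (simp add: dist_norm)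
          also have "\<dots> \<le> 2 * R * (1/2)^n * CT" using cT[OF x] R_props(1) by (intro mult_left_mono) auto
          also have "\<dots> = (2 * R * CT) * (1/2)^n" by (simp add: ac_simps)
          also have "\<dots> < e" using M n by auto
          finally show "dist (\<psi> n x) (\<phi> x) < e" .
        qed
      qed
    qed simp
  qed
  have \<phi>ball: "inball \<phi>"
    unfolding inball_def
  proof (intro conjI allI impI \<phi>c)
    fix t :: real assume t: "t \<ge> 0"
    have "(\<lambda>n. norm (\<psi> n t - \<phi>ap t)) \<longlonglongrightarrow> norm (\<phi> t - \<phi>ap t)"
      by (intro tendsto_norm tendsto_diff conv[OF t] tendsto_const)
    then show "norm (\<phi> t - \<phi>ap t) \<le> R * exp (- B * t)"
      by (rule LIMSEQ_le_const2) (use ball\<psi> t in \<open>auto simp: inball_def\<close>)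
  qed
  have fixp: "Phi \<phi> t = \<phi> t" if t: "t \<ge> 0" for t
  proof -
    have "(\<lambda>n. \<psi> (Suc n) t - Phi \<phi> t) \<longlonglongrightarrow> 0"
    proof (rule Lim_null_comparison)
      show "\<forall>\<^sub>F n in sequentially. norm (\<psi> (Suc n) t - Phi \<phi> t) \<le> R * c t * (1/2)^n"
      proof (rule always_eventually, intro allI)
        fix n
        have "norm (Phi (\<psi> n) t - Phi \<phi> t) \<le> (2 * R * (1/2)^n) / 2 * exp ((lam - B) * t)"
          by (rule contraction[OF ball\<psi> \<phi>ball _ _ t]) (use bnd R_props(1) in \<open>auto simp: c_def\<close>)
        moreover have "(2 * R * (1/2::real)^n) / 2 * exp ((lam - B) * t) = R * c t * (1/2)^n"
          by (simp add: c_def)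
        moreover have "\<psi> (Suc n) t - Phi \<phi> t = Phi (\<psi> n) t - Phi \<phi> t"
          by (simp only: \<psi>S)
        ultimately show "norm (\<psi> (Suc n) t - Phi \<phi> t) \<le> R * c t * (1/2)^n" by metis
      qed
      have "(\<lambda>n. R * c t * (1/2::real)^n) \<longlonglongrightarrow> R * c t * 0"
        by (intro tendsto_mult tendsto_const LIMSEQ_power_zero) simp
      then show "(\<lambda>n. R * c t * (1/2::real)^n) \<longlonglongrightarrow> 0" by simp
    qed
    then have "(\<lambda>n. \<psi> (Suc n) t) \<longlonglongrightarrow> Phi \<phi> t" by (rule LIM_zero_cancel)
    moreover have "(\<lambda>n. \<psi> (Suc n) t) \<longlonglongrightarrow> \<phi> t" using conv[OF t] by (rule LIMSEQ_Suc)
    ultimately show ?thesis by (rule LIMSEQ_unique)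
  qed
  show ?thesis using \<phi>ball fixp by blast
qed

lemma main_result:
  "\<exists>\<phi>. continuous_on {0..} \<phi> \<and>
     (\<forall>t\<ge>0. (\<lambda>s. Sm (t - s) (Pb (\<phi> s) (\<phi> s) + \<xi> s)) integrable_on {0..t} \<and>
             \<phi> t = SF t f0 + integral {0..t} (\<lambda>s. Sm (t - s) (Pb (\<phi> s) (\<phi> s) + \<xi> s))) \<and>
     (\<forall>t\<ge>0. norm (\<phi> t - \<phi>ap t) \<le> R * exp (- B * t))"
proof -
  obtain \<phi> where b: "inball \<phi>" and f: "\<And>t. t \<ge> 0 \<Longrightarrow> Phi \<phi> t = \<phi> t" using exists_fix by blast
  have c: "continuous_on {0..} \<phi>" using b by (simp add: inball_def)
  show ?thesis
  proof (intro exI[of _ \<phi>] conjI allI impI c)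
    fix t :: real assume t: "t \<ge> 0"
    show "(\<lambda>s. Sm (t - s) (Pb (\<phi> s) (\<phi> s) + \<xi> s)) integrable_on {0..t}" by (rule Phi_int[OF c t])
    show "\<phi> t = SF t f0 + integral {0..t} (\<lambda>s. Sm (t - s) (Pb (\<phi> s) (\<phi> s) + \<xi> s))"
      using f[OF t] by (simp add: Phi_def)
  next
    fix t :: real assume t: "t \<ge> 0"
    show "norm (\<phi> t - \<phi>ap t) \<le> R * exp (- B * t)" using b t by (simp add: inball_def)
  qed
qed

end


theorem proposition5p10:
  fixes iP :: "'p::banach \<Rightarrow> 'f::banach"
    and iF :: "'f \<Rightarrow> 'm::banach"
    and A :: "'p \<Rightarrow> 'm"
    and T :: "real \<Rightarrow> 'm \<Rightarrow> 'm"
    and SF :: "real \<Rightarrow> 'f \<Rightarrow> 'f"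
    and Sm :: "real \<Rightarrow> 'm \<Rightarrow> 'f"
    and B N K \<sigma> Ec Dc :: real
    and \<mu> :: "real \<Rightarrow> real"
    and Pb :: "'f \<Rightarrow> 'f \<Rightarrow> 'm"
    and \<xi> :: "real \<Rightarrow> 'm"
    and f0 :: 'f
    and \<phi>ap :: "real \<Rightarrow> 'f"
  assumes emb_P: "dense_embedding iP"
    and emb_F: "dense_embedding iF"
    and A_lin: "linear A"
    and A_norm: "\<exists>c C. c > 0 \<and> C > 0 \<and> (\<forall>p. c * norm p \<le> norm (iF (iP p)) + norm (A p)
                    \<and> norm (iF (iP p)) + norm (A p) \<le> C * norm p)"
    and T_sg: "strongly_continuous_semigroup T"
    and T_gen: "is_generator T (iF \<circ> iP) A"
    and SF_def: "\<forall>t\<ge>0. \<forall>f. iF (SF t f) = T t (iF f)"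
    and SF_cont: "continuous_on (UNIV \<times> {0..}) (\<lambda>(f, t). SF t f)"
    and Sm_def: "\<forall>t>0. \<forall>g. iF (Sm t g) = T t g"
    and Sm_cont: "continuous_on (UNIV \<times> {0<..}) (\<lambda>(g, t). Sm t g)"
    and B_nonneg: "B \<ge> 0"
    and N_pos: "N > 0"
    and SF_est: "\<forall>t\<ge>0. \<forall>f. norm (SF t f) \<le> exp (- B * t) * norm f"
    and Sm_est: "\<forall>t>0. \<forall>g. norm (Sm t g) \<le> \<mu> t * exp (- B * t) * norm g"
    and \<mu>_cont: "continuous_on {0<..} \<mu>"
    and \<mu>_pos: "\<forall>t>0. \<mu> t > 0"
    and \<sigma>_range: "0 < \<sigma>" "\<sigma> \<le> 1"
    and \<mu>_bigO: "\<mu> \<in> O[at_right 0](\<lambda>t. t powr (- (1 - \<sigma>)))"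
    and \<mu>_int: "\<forall>t\<ge>0. integral {0..t} (\<lambda>s. \<mu> (t - s) * exp (- B * s)) \<le> N"
    and Pb_bilinear: "bilinear Pb"
    and K_pos: "K > 0"
    and Pb_bound: "\<forall>f g. norm (Pb f g) \<le> K * norm f * norm g"
    and \<xi>_loclip: "\<forall>T'\<ge>0. \<exists>L. L-lipschitz_on {0..T'} \<xi>"
    and \<phi>ap_cont: "continuous_on {0..} \<phi>ap"
    and Ec_nonneg: "Ec \<ge> 0"
    and Dc_nonneg: "Dc \<ge> 0"
    and err_bound: "\<forall>t\<ge>0. norm (\<phi>ap t - SF t f0
                      - integral {0..t} (\<lambda>s. Sm (t - s) (Pb (\<phi>ap s) (\<phi>ap s) + \<xi> s)))
                    \<le> Ec * exp (- B * t)"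
    and ap_bound: "\<forall>t\<ge>0. norm (\<phi>ap t) \<le> Dc * exp (- B * t)"
    and smallness: "2 * sqrt (K * N * Ec) + 2 * K * N * Dc \<le> 1"
  shows "\<exists>\<phi> :: real \<Rightarrow> 'f. continuous_on {0..} \<phi> \<and>
           (\<forall>t\<ge>0. (\<lambda>s. Sm (t - s) (Pb (\<phi> s) (\<phi> s) + \<xi> s)) integrable_on {0..t} \<and>
                   \<phi> t = SF t f0 + integral {0..t} (\<lambda>s. Sm (t - s) (Pb (\<phi> s) (\<phi> s) + \<xi> s))) \<and>
           (\<forall>t\<ge>0. norm (\<phi> t - \<phi>ap t)
              \<le> ((1 - 2 * K * N * Dc - sqrt ((1 - 2 * K * N * Dc)\<^sup>2 - 4 * K * N * Ec))
                   / (2 * K * N)) * exp (- B * t))"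
proof -
  define \<mu>' where "\<mu>' r = (if 0 < r then \<mu> r else 0)" for r
  have iFl: "linear iF" "inj iF"
    using emb_F by (auto simp: dense_embedding_def bounded_linear.linear)
  have Tl: "\<And>t. t \<ge> 0 \<Longrightarrow> linear (T t)"
    using T_sg by (auto simp: strongly_continuous_semigroup_def bounded_linear.linear)
  have \<mu>'c: "continuous_on {0<..} \<mu>'"
    by (rule continuous_on_eq[OF \<mu>_cont]) (simp add: \<mu>'_def)
  have \<mu>'n: "\<And>t. \<mu>' t \<ge> 0"
    using \<mu>_pos by (simp add: \<mu>'_def less_imp_le)
  have ev: "eventually (\<lambda>x. \<mu> x = \<mu>' x) (at_right (0::real))"
    using eventually_at_right_less[of "0::real"] by eventually_elim (simp add: \<mu>'_def)
  have \<mu>'O: "\<mu>' \<in> O[at_right 0](\<lambda>t. t powr (- (1 - \<sigma>)))"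
    using landau_o.big.in_cong[OF ev] \<mu>_bigO by simp
  have \<mu>'i: "\<And>t. t \<ge> 0 \<Longrightarrow> integral {0..t} (\<lambda>s. \<mu>' (t - s) * exp (- B * s)) \<le> N"
  proof -
    fix t :: real assume t: "t \<ge> 0"
    have "integral {0..t} (\<lambda>s. \<mu>' (t - s) * exp (- B * s)) = integral {0..t} (\<lambda>s. \<mu> (t - s) * exp (- B * s))"
      by (rule integral_spike[of "{t}"]) (auto simp: \<mu>'_def)
    then show "integral {0..t} (\<lambda>s. \<mu>' (t - s) * exp (- B * s)) \<le> N" using \<mu>_int t by simp
  qed
  have Sme: "\<And>t g. t > 0 \<Longrightarrow> norm (Sm t g) \<le> \<mu>' t * exp (- B * t) * norm g"
    using Sm_est by (simp add: \<mu>'_def)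
  have \<xi>c: "continuous_on {0..} \<xi>"
  proof (rule cont_glue)
    fix T' :: real assume "T' \<ge> 0"
    then obtain L where "L-lipschitz_on {0..T'} \<xi>" using \<xi>_loclip by blast
    then show "continuous_on {0..T'} \<xi>" by (rule lipschitz_on_continuous_on)
  qed
  interpret ms: main_setting iF T SF Sm B N K \<sigma> \<mu>' Pb \<xi> f0 \<phi>ap Ec Dc
    by (intro main_setting.intro setting.intro main_setting_axioms.intro)
      (use iFl Tl SF_def SF_cont Sm_def Sm_cont B_nonneg N_pos Sme \<mu>'c \<mu>'n \<sigma>_range \<mu>'O \<mu>'i
        Pb_bilinear K_pos Pb_bound \<xi>c \<phi>ap_cont Ec_nonneg Dc_nonneg err_bound ap_bound smallness in auto)
  show ?thesis using ms.main_result unfolding ms.R_def .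
qed

end
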